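(* Let $k=k(n)$ be an integer with $\frac{n}{4\ln n}<k\le n$. There is a constant $c>0$ such that if $r>\sqrt{\frac{c\ln\ln n}{k}}$, then w.h.p. $G(n,r)$ has no independent set of size $k$.
   Context: Here the $n$ points of $G(n,r)$ are chosen independently and uniformly at random on the unit torus (the unit square with wraparound); two points are joined by a straight-line edge iff their distance is at most $r=r(n)$. An independent set is a set of vertices no two of which are adjacent. "W.h.p." means with probability tending to $1$ as $n\to\infty$. *)

theory Defs
  imports "HOL-Probability.Probability"
begin

text \<open>The unit torus is modelled by the fundamental domain [0,1)^2 with the
  wrap-around (torus) distance.\<close>

definition circ_dist :: "real \<Rightarrow> real \<Rightarrow> real" where
  "circ_dist a b = min \<bar>a - b\<bar> (1 - \<bar>a - b\<bar>)"

definition torus_dist :: "real \<times> real \<Rightarrow> real \<times> real \<Rightarrow> real" where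
  "torus_dist p q = sqrt ((circ_dist (fst p) (fst q))\<^sup>2 + (circ_dist (snd p) (snd q))\<^sup>2)"

definition unif_torus :: "(real \<times> real) measure" where
  "unif_torus = uniform_measure lborel ({0..<1} \<times> {0..<1})"

definition rgg_space :: "nat \<Rightarrow> (nat \<Rightarrow> real \<times> real) measure" where
  "rgg_space n = PiM {..<n} (\<lambda>_. unif_torus)"

text \<open>In G(n,r) vertices i, j are adjacent iff the torus distance of X_i and X_j is
  at most r.  The event that G(n,r) has an independent set of size k.\<close>
definition has_indep_set :: "nat \<Rightarrow> real \<Rightarrow> nat \<Rightarrow> (nat \<Rightarrow> real \<times> real) set" where
  "has_indep_set n r k =
     {X \<in> space (rgg_space n). \<exists>S \<subseteq> {..<n}. card S = k \<and>
        (\<forall>i\<in>S. \<forall>j\<in>S. i \<noteq> j \<longrightarrow> torus_dist (X i) (X j) > r)}"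

end

theory Submission imports Defs "HOL-Real_Asymp.Real_Asymp" begin

lemma circ_le: assumes "\<bar>a - b\<bar> < e" "e \<le> 1" shows "(circ_dist a b)\<^sup>2 < e\<^sup>2"
proof -
  have "0 \<le> circ_dist a b" "circ_dist a b \<le> \<bar>a - b\<bar>" using assms unfolding circ_dist_def by auto
  then show ?thesis using assms
    by (intro power_strict_mono) auto
qed

lemma floor_close: "\<lfloor>x::real\<rfloor> = \<lfloor>y\<rfloor> \<Longrightarrow> \<bar>x - y\<bar> < 1"
  by linarith

lemma core:
  fixes X :: "nat \<Rightarrow> real \<times> real" and m :: nat
  assumes box: "\<forall>i<n. X i \<in> {0..<1} \<times> {0..<1}" and S: "S \<subseteq> {..<n}" "card S = k"
    and ind: "\<forall>i\<in>S. \<forall>j\<in>S. i \<noteq> j \<longrightarrow> torus_dist (X i) (X j) > r"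
    and m: "m > 0" "sqrt 2 / m \<le> r" "m\<^sup>2 < k"
  shows False
proof -
  define f where "f i = (\<lfloor>m * fst (X i)\<rfloor>, \<lfloor>m * snd (X i)\<rfloor>)" for i
  have img: "f ` S \<subseteq> {0..<int m} \<times> {0..<int m}"
  proof
    fix p assume "p \<in> f ` S"
    then obtain i where i: "i \<in> S" "p = f i" by auto
    then have "i < n" using S by auto
    then have "0 \<le> fst (X i)" "fst (X i) < 1" "0 \<le> snd (X i)" "snd (X i) < 1" using box by auto
    moreover have "real m > 0" using m by auto
    ultimately have "0 \<le> m * fst (X i)" "m * fst (X i) < m" "0 \<le> m * snd (X i)" "m * snd (X i) < m"
      by auto
    then show "p \<in> {0..<int m} \<times> {0..<int m}" using i unfolding f_def
      by (auto simp: floor_less_iff)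
  qed
  have "card (f ` S) \<le> card ({0..<int m} \<times> {0..<int m})"
    by (rule card_mono[OF _ img]) auto
  also have "\<dots> = m\<^sup>2" by (simp add: card_cartesian_product power2_eq_square)
  finally have "card (f ` S) < card S" using m S by auto
  then have "\<not> inj_on f S" using card_image by fastforce
  then obtain i j where ij: "i \<in> S" "j \<in> S" "i \<noteq> j" "f i = f j" unfolding inj_on_def by blast
  have mpos: "real m > 0" using m by auto
  have e1: "1 / real m \<le> 1" using m by auto
  have "\<bar>m * fst (X i) - m * fst (X j)\<bar> < 1" using ij(4) floor_close unfolding f_def by auto
  then have "\<bar>fst (X i) - fst (X j)\<bar> < 1 / m" using mpos
    by (simp add: pos_less_divide_eq abs_mult[symmetric] right_diff_distrib[symmetric] mult.commute)
  then have a: "(circ_dist (fst (X i)) (fst (X j)))\<^sup>2 < (1/m)\<^sup>2" using circ_le e1 by blast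
  have "\<bar>m * snd (X i) - m * snd (X j)\<bar> < 1" using ij(4) floor_close unfolding f_def by auto
  then have "\<bar>snd (X i) - snd (X j)\<bar> < 1 / m" using mpos
    by (simp add: pos_less_divide_eq abs_mult[symmetric] right_diff_distrib[symmetric] mult.commute)
  then have b: "(circ_dist (snd (X i)) (snd (X j)))\<^sup>2 < (1/m)\<^sup>2" using circ_le e1 by blast
  have "torus_dist (X i) (X j) < sqrt (2 * (1/m)\<^sup>2)"
    unfolding torus_dist_def using a b by (intro real_sqrt_less_mono) linarith
  also have "\<dots> = sqrt 2 / m" using mpos by (simp add: real_sqrt_mult real_sqrt_divide)
  finally show False using ind ij m by force
qed

lemma box_sets: "{0..<1::real} \<times> {0..<1::real} \<in> sets borel"
  by (metis atLeastLessThan_borel borel_prod pair_measureI)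

lemma AE_box: "AE x in unif_torus. x \<in> {0..<1} \<times> {0..<1}"
  unfolding unif_torus_def by (rule AE_uniform_measureI) (auto simp: box_sets)

lemma box_meas: "emeasure lborel ({0..<1::real} \<times> {0..<1::real}) = 1"
proof -
  have "emeasure lborel ({0..<1::real} \<times> {0..<1::real}) = emeasure (lborel \<Otimes>\<^sub>M lborel) ({0..<1::real} \<times> {0..<1::real})"
    by (simp add: lborel_prod)
  also have "\<dots> = emeasure lborel {0..<1::real} * emeasure lborel {0..<1::real}"
    by (intro lborel.emeasure_pair_measure_Times) auto
  also have "\<dots> = 1" by simp
  finally show ?thesis .
qed

lemma prob_unif: "prob_space unif_torus"
  unfolding unif_torus_def by (rule prob_space_uniform_measure) (simp_all add: box_meas)

lemma AE_rgg: "AE X in rgg_space n. \<forall>i\<in>{..<n}. X i \<in> {0..<1} \<times> {0..<1}"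
proof (rule eventually_ball_finite)
  show "finite {..<n}" by simp
  show "\<forall>i\<in>{..<n}. AE X in rgg_space n. X i \<in> {0..<1} \<times> {0..<1}"
    unfolding rgg_space_def using prob_unif AE_box
    by (auto intro!: AE_PiM_component[where P="\<lambda>x. x \<in> {0..<1} \<times> {0..<1}"])
qed

lemma sets_rgg: "sets (rgg_space n) = sets (PiM {..<n} (\<lambda>_. borel :: (real\<times>real) measure))"
  unfolding rgg_space_def unif_torus_def by (intro sets_PiM_cong) auto

lemma meas_dist: "(\<lambda>X. torus_dist (X i) (X j)) \<in> borel_measurable (rgg_space n)" if "i < n" "j < n"
proof -
  have [measurable]: "i \<in> {..<n}" "j \<in> {..<n}" using that by auto
  have "(\<lambda>X. torus_dist (X i) (X j)) \<in> borel_measurable (PiM {..<n} (\<lambda>_. (borel \<Otimes>\<^sub>M borel) :: (real\<times>real) measure))"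
    unfolding torus_dist_def circ_dist_def
    by measurable
  then have "(\<lambda>X. torus_dist (X i) (X j)) \<in> borel_measurable (PiM {..<n} (\<lambda>_. borel :: (real\<times>real) measure))"
    by (simp add: borel_prod)
  then show ?thesis using measurable_cong_sets[OF sets_rgg refl] by blast
qed

lemma pair_sets: "{X \<in> space (rgg_space n). i \<noteq> j \<longrightarrow> torus_dist (X i) (X j) > r} \<in> sets (rgg_space n)"
  if "i < n" "j < n"
proof (cases "i = j")
  case True then show ?thesis by simp
next
  case False
  have [measurable]: "(\<lambda>X. torus_dist (X i) (X j)) \<in> borel_measurable (rgg_space n)"
    using meas_dist that by blast
  have "{X \<in> space (rgg_space n). torus_dist (X i) (X j) > r} \<in> sets (rgg_space n)"
    by measurable
  then show ?thesis using False by simp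
qed

lemma indep_sets: "has_indep_set n r k \<in> sets (rgg_space n)"
proof -
  let ?F = "{S. S \<subseteq> {..<n} \<and> card S = k}"
  have fin: "finite ?F" by (rule finite_subset[of _ "Pow {..<n}"]) auto
  have eq: "has_indep_set n r k = {X \<in> space (rgg_space n). \<exists>S\<in>?F.
      \<forall>i\<in>S. \<forall>j\<in>S. i \<noteq> j \<longrightarrow> torus_dist (X i) (X j) > r}"
    unfolding has_indep_set_def by auto
  show ?thesis unfolding eq
  proof (rule sets.sets_Collect_finite_Ex[OF _ fin])
    fix S assume S: "S \<in> ?F"
    then have fS: "finite S" using finite_subset by blast
    show "{X \<in> space (rgg_space n). \<forall>i\<in>S. \<forall>j\<in>S. i \<noteq> j \<longrightarrow> torus_dist (X i) (X j) > r} \<in> sets (rgg_space n)"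
    proof (rule sets.sets_Collect_finite_All[OF _ fS])
      fix i assume i: "i \<in> S"
      show "{X \<in> space (rgg_space n). \<forall>j\<in>S. i \<noteq> j \<longrightarrow> torus_dist (X i) (X j) > r} \<in> sets (rgg_space n)"
      proof (rule sets.sets_Collect_finite_All[OF _ fS])
        fix j assume j: "j \<in> S"
        show "{X \<in> space (rgg_space n). i \<noteq> j \<longrightarrow> torus_dist (X i) (X j) > r} \<in> sets (rgg_space n)"
          using S i j by (intro pair_sets) auto
      qed
    qed
  qed
qed

lemma choose_m:
  fixes r L :: real and k :: nat
  assumes L: "L \<ge> 8" and k: "k \<ge> 2" and r: "r > sqrt (L / k)"
  shows "\<exists>m::nat. m > 0 \<and> sqrt 2 / m \<le> r \<and> m\<^sup>2 < k"
proof -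
  have kpos: "real k > 0" using k by auto
  have "L / k > 0" using L kpos by auto
  then have rpos: "r > 0" using r by (meson order.strict_trans real_sqrt_gt_zero)
  have "r\<^sup>2 > L / k" using r \<open>L / k > 0\<close>
    by (metis real_sqrt_less_iff real_sqrt_unique less_eq_real_def rpos real_sqrt_pow2 order.strict_implies_order power2_less_imp_less real_less_lsqrt)
  define t where "t = sqrt 2 / r"
  have tpos: "t > 0" unfolding t_def using rpos by auto
  have t2: "t\<^sup>2 = 2 / r\<^sup>2" unfolding t_def by (simp add: power_divide)
  have "0 < r\<^sup>2 * (L / k)" using rpos \<open>L / k > 0\<close> by (intro mult_pos_pos) auto
  then have "2 / r\<^sup>2 < 2 / (L / k)" using \<open>r\<^sup>2 > L / k\<close> \<open>L / k > 0\<close>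
    by (intro divide_strict_left_mono) auto
  also have "\<dots> = 2 * k / L" by simp
  also have "\<dots> \<le> k / 4" using L kpos by (simp add: field_simps)
  finally have tk: "4 * t\<^sup>2 < k" using t2 by simp
  define m where "m = nat \<lceil>t\<rceil>"
  have mt: "real m \<ge> t" "real m < t + 1" unfolding m_def using tpos by linarith+
  have mpos: "m > 0" using mt tpos by auto
  have "sqrt 2 / m \<le> r"
  proof -
    have "sqrt 2 / m \<le> sqrt 2 / t" using mt tpos by (intro divide_left_mono) auto
    also have "\<dots> = r" unfolding t_def using rpos by simp
    finally show ?thesis .
  qed
  moreover have "m\<^sup>2 < k"
  proof (cases "m = 1")
    case True then show ?thesis using k by simp
  next
    case False
    then have m2: "m \<ge> 2" using mpos by auto
    have "0 \<le> real m - 1" "real m - 1 < t" using mt m2 by auto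
    then have "(real m - 1)\<^sup>2 < t\<^sup>2" by (intro power_strict_mono) auto
    moreover have "real m \<le> 2 * (real m - 1)" using m2 by simp
    then have "(real m)\<^sup>2 \<le> (2 * (real m - 1))\<^sup>2" by (intro power_mono) auto
    moreover have "(2 * (real m - 1))\<^sup>2 = 4 * (real m - 1)\<^sup>2" by (simp add: power2_eq_square algebra_simps)
    ultimately have "(real m)\<^sup>2 < real k" using tk by linarith
    then show ?thesis by (metis of_nat_less_iff of_nat_power)
  qed
  ultimately show ?thesis using mpos
    by (intro exI[of _ m]) (metis of_nat_0_less_iff of_nat_less_iff of_nat_power)
qed

lemma ev1: "eventually (\<lambda>n. ln (ln (real n)) \<ge> 8) sequentially"
  by real_asymp
lemma ev2: "eventually (\<lambda>n. real n / (4 * ln (real n)) \<ge> 1) sequentially"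
  by real_asymp

theorem corollary6:
  shows "\<exists>c>0. \<forall>(k :: nat \<Rightarrow> nat) (r :: nat \<Rightarrow> real).
     (\<forall>\<^sub>F n in sequentially. real n / (4 * ln (real n)) < real (k n) \<and> k n \<le> n \<and>
         r n > sqrt (c * ln (ln (real n)) / real (k n)))
     \<longrightarrow> (\<forall>n. has_indep_set n (r n) (k n) \<in> sets (rgg_space n)) \<and>
         (\<lambda>n. measure (rgg_space n) (has_indep_set n (r n) (k n))) \<longlonglongrightarrow> 0"
proof (rule exI[of _ "1::real"], rule conjI, simp, intro allI impI, rule conjI)
  fix k :: "nat \<Rightarrow> nat" and r :: "nat \<Rightarrow> real"
  assume H: "\<forall>\<^sub>F n in sequentially. real n / (4 * ln (real n)) < real (k n) \<and> k n \<le> n \<and>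
         r n > sqrt (1 * ln (ln (real n)) / real (k n))"
  show "\<forall>n. has_indep_set n (r n) (k n) \<in> sets (rgg_space n)" using indep_sets by blast
  have "eventually (\<lambda>n. measure (rgg_space n) (has_indep_set n (r n) (k n)) = 0) sequentially"
    using H ev1 ev2
  proof eventually_elim
    case (elim n)
    have k2: "k n \<ge> 2" using elim by linarith
    obtain m :: nat where m: "m > 0" "sqrt 2 / m \<le> r n" "m\<^sup>2 < k n"
      using choose_m[of "ln (ln (real n))" "k n" "r n"] elim k2 by auto
    have "AE X in rgg_space n. X \<notin> has_indep_set n (r n) (k n)"
      using AE_rgg
    proof eventually_elim
      case (elim X)
      show ?case
      proof
        assume "X \<in> has_indep_set n (r n) (k n)"
        then obtain S where S: "S \<subseteq> {..<n}" "card S = k n"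
          "\<forall>i\<in>S. \<forall>j\<in>S. i \<noteq> j \<longrightarrow> torus_dist (X i) (X j) > r n"
          unfolding has_indep_set_def by blast
        show False using core[of n X S "k n" "r n" m] S m elim by auto
      qed
    qed
    then have "emeasure (rgg_space n) (has_indep_set n (r n) (k n)) = 0"
      using AE_iff_measurable[OF indep_sets[of n "r n" "k n"], of "\<lambda>X. X \<notin> has_indep_set n (r n) (k n)"]
        sets.sets_into_space[OF indep_sets[of n]]
      by (auto simp: subset_eq)
    then show ?case by (simp add: measure_def)
  qed
  then show "(\<lambda>n. measure (rgg_space n) (has_indep_set n (r n) (k n))) \<longlonglongrightarrow> 0"
    by (rule tendsto_eventually)
qed

end
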